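(* For $n\ge1$ let $Z_n$ be the value in the top cell of a uniformly random element of $\mathcal{C}^*_{n,1}$, i.e. $\mathbb{P}(Z_n=m)=\frac{[t^nx^m]V(t,x)}{[t^n]V(t,1)}$. Then $Z_n/(2n)$ converges in law to a random variable $Z$ uniformly distributed on $[0,1]$ (density $1$ on $[0,1]$, $0$ otherwise), whose moments are $\mathbb{E}(Z^r)=\frac{1}{r+1}$.
   Context: For $n\ge 0$, let $\mathcal{C}^*_{n,1}$ be the set of fillings, bijectively with $1,\dots,2n+1$, of the three-row shape having one top-row cell in column $1$, middle-row cells in columns $1,\dots,n$ and bottom-row cells in columns $1,\dots,n$, with entries increasing from left to right along the middle row and from bottom to top within each column, and no condition among bottom-row entries. $v_{n,i}$ is the number of elements of $\mathcal{C}^*_{n,1}$ whose top cell contains $i$, and $V(t,x)=\sum_{n,i\ge0}v_{n,i}\frac{t^n}{n!}x^i$. *)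

theory Defs
  imports "HOL-Probability.Probability"
begin

text \<open>Cells of the three-row shape: one top cell (column 1), middle-row cells
  Mid j and bottom-row cells Bot j for columns j = 1..n.\<close>
datatype cell = Top | Mid nat | Bot nat

definition cells :: "nat \<Rightarrow> cell set" where
  "cells n = {Top} \<union> Mid ` {1..n} \<union> Bot ` {1..n}"

definition Cstar :: "nat \<Rightarrow> (cell \<Rightarrow> nat) set" where
  "Cstar n = {f \<in> cells n \<rightarrow>\<^sub>E {1..2*n+1}.
      bij_betw f (cells n) {1..2*n+1}
    \<and> (\<forall>j\<in>{1..<n}. f (Mid j) < f (Mid (Suc j)))
    \<and> (\<forall>j\<in>{1..n}. f (Bot j) < f (Mid j))
    \<and> (1 \<le> n \<longrightarrow> f (Mid 1) < f Top)}"

definition v :: "nat \<Rightarrow> nat \<Rightarrow> nat" where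
  "v n i = card {f \<in> Cstar n. f Top = i}"

text \<open>Coefficients of V(t,x) = sum v_{n,i} t^n/n! x^i.\<close>
definition V_coeff :: "nat \<Rightarrow> nat \<Rightarrow> real" where
  "V_coeff n m = real (v n m) / fact n"

text \<open>[t^n] V(t,1) = sum over i of v_{n,i}/n! (only i \<le> 2n+1 contribute).\<close>
definition V1_coeff :: "nat \<Rightarrow> real" where
  "V1_coeff n = (\<Sum>i\<le>2*n+1. V_coeff n i)"

definition Z_law :: "nat \<Rightarrow> nat measure" where
  "Z_law n = density (count_space UNIV) (\<lambda>m. ennreal (V_coeff n m / V1_coeff n))"

definition Z_scaled_law :: "nat \<Rightarrow> real measure" where
  "Z_scaled_law n = distr (Z_law n) borel (\<lambda>m. real m / (2 * real n))"

end

theory Submission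
  imports Defs "HOL-Real_Asymp.Real_Asymp"
begin


lemma cells_Suc: "cells (Suc m) = cells m \<union> {Mid (Suc m), Bot (Suc m)}"
  unfolding cells_def by (auto simp: atLeastAtMostSuc_conv)

lemma finite_cells[simp]: "finite (cells n)"
  unfolding cells_def by auto

lemma card_cells: "card (cells n) = 2*n+1"
proof (induction n)
  case 0 then show ?case by (simp add: cells_def)
next
  case (Suc m)
  have "Mid (Suc m) \<notin> cells m" "Bot (Suc m) \<notin> cells m" by (auto simp: cells_def)
  then show ?case using Suc by (simp add: cells_Suc card_insert_if)
qed

lemma Top_cells[simp]: "Top \<in> cells n" by (simp add: cells_def)
lemma Mid_cells[simp]: "Mid j \<in> cells n \<longleftrightarrow> 1 \<le> j \<and> j \<le> n" by (auto simp: cells_def)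
lemma Bot_cells[simp]: "Bot j \<in> cells n \<longleftrightarrow> 1 \<le> j \<and> j \<le> n" by (auto simp: cells_def)

lemma inj_bij:
  assumes "f \<in> cells n \<rightarrow>\<^sub>E {1..2*n+1}" "inj_on f (cells n)"
  shows "bij_betw f (cells n) {1..2*n+1}"
proof -
  have sub: "f ` cells n \<subseteq> {1..2*n+1}" using assms(1) by auto
  have "card (f ` cells n) = card {1..2*n+1::nat}"
    using card_image[OF assms(2)] card_cells by simp
  then have "f ` cells n = {1..2*n+1}" using card_subset_eq[OF _ sub] by simp
  then show ?thesis using assms(2) by (simp add: bij_betw_def)
qed

lemma Cstar_iff: "f \<in> Cstar n \<longleftrightarrow> f \<in> cells n \<rightarrow>\<^sub>E {1..2*n+1} \<and> inj_on f (cells n)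
    \<and> (\<forall>j\<in>{1..<n}. f (Mid j) < f (Mid (Suc j)))
    \<and> (\<forall>j\<in>{1..n}. f (Bot j) < f (Mid j))
    \<and> (1 \<le> n \<longrightarrow> f (Mid 1) < f Top)"
proof -
  have aux: "\<And>A B C D. (A \<Longrightarrow> (B \<longleftrightarrow> C)) \<Longrightarrow> (A \<and> B \<and> D) \<longleftrightarrow> (A \<and> C \<and> D)" by blast
  show ?thesis unfolding Cstar_def mem_Collect_eq
    by (rule aux, rule iffI, erule bij_betw_imp_inj_on, rule inj_bij, assumption+)
qed

lemma Cstar_D:
  assumes "f \<in> Cstar n"
  shows "f \<in> cells n \<rightarrow>\<^sub>E {1..2*n+1}" "bij_betw f (cells n) {1..2*n+1}"
    "\<forall>j\<in>{1..<n}. f (Mid j) < f (Mid (Suc j))"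
    "\<forall>j\<in>{1..n}. f (Bot j) < f (Mid j)"
    "1 \<le> n \<longrightarrow> f (Mid 1) < f Top"
proof -
  have h: "f \<in> cells n \<rightarrow>\<^sub>E {1..2*n+1} \<and> bij_betw f (cells n) {1..2*n+1}
    \<and> (\<forall>j\<in>{1..<n}. f (Mid j) < f (Mid (Suc j)))
    \<and> (\<forall>j\<in>{1..n}. f (Bot j) < f (Mid j))
    \<and> (1 \<le> n \<longrightarrow> f (Mid 1) < f Top)" using assms unfolding Cstar_def by (rule CollectD)
  show "f \<in> cells n \<rightarrow>\<^sub>E {1..2*n+1}" by (rule h[THEN conjunct1])
  show "bij_betw f (cells n) {1..2*n+1}" by (rule h[THEN conjunct2, THEN conjunct1])
  show "\<forall>j\<in>{1..<n}. f (Mid j) < f (Mid (Suc j))" by (rule h[THEN conjunct2, THEN conjunct2, THEN conjunct1])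
  show "\<forall>j\<in>{1..n}. f (Bot j) < f (Mid j)" by (rule h[THEN conjunct2, THEN conjunct2, THEN conjunct2, THEN conjunct1])
  show "1 \<le> n \<longrightarrow> f (Mid 1) < f Top" by (rule h[THEN conjunct2, THEN conjunct2, THEN conjunct2, THEN conjunct2])
qed

lemma Cstar_intro:
  assumes "f \<in> cells n \<rightarrow>\<^sub>E {1..2*n+1}" "inj_on f (cells n)"
    "\<forall>j\<in>{1..<n}. f (Mid j) < f (Mid (Suc j))"
    "\<forall>j\<in>{1..n}. f (Bot j) < f (Mid j)"
    "1 \<le> n \<longrightarrow> f (Mid 1) < f Top"
  shows "f \<in> Cstar n"
  unfolding Cstar_iff by (rule conjI[OF assms(1) conjI[OF assms(2) conjI[OF assms(3) conjI[OF assms(4) assms(5)]]]])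

lemma finite_Cstar: "finite (Cstar n)"
proof -
  have "Cstar n \<subseteq> cells n \<rightarrow>\<^sub>E {1..2*n+1}" by (rule subsetI) (rule Cstar_D(1))
  then show ?thesis by (rule finite_subset) (auto intro: finite_PiE)
qed

lemma Cstar_val: "f \<in> Cstar n \<Longrightarrow> x \<in> cells n \<Longrightarrow> f x \<in> {1..2*n+1}"
  by (rule PiE_mem[OF Cstar_D(1)])

lemma Cstar_out: "f \<in> Cstar n \<Longrightarrow> x \<notin> cells n \<Longrightarrow> f x = undefined"
  by (rule PiE_arb[OF Cstar_D(1)])

lemma Cstar_inj: "f \<in> Cstar n \<Longrightarrow> x \<in> cells n \<Longrightarrow> y \<in> cells n \<Longrightarrow> f x = f y \<Longrightarrow> x = y"
  by (rule inj_onD[OF bij_betw_imp_inj_on[OF Cstar_D(2)]])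

lemma Cstar_surj: "f \<in> Cstar n \<Longrightarrow> k \<in> {1..2*n+1} \<Longrightarrow> \<exists>x\<in>cells n. f x = k"
proof -
  assume a: "f \<in> Cstar n" "k \<in> {1..2*n+1}"
  have "f ` cells n = {1..2*n+1}" using Cstar_D(2)[OF a(1)] by (simp add: bij_betw_def)
  then have "k \<in> f ` cells n" using a(2) by simp
  then show ?thesis by (rule imageE) (rule bexI, rule sym)
qed

lemma Cstar_chain: "f \<in> Cstar n \<Longrightarrow> 1 \<le> j \<Longrightarrow> j \<le> k \<Longrightarrow> k \<le> n \<Longrightarrow> f (Mid j) \<le> f (Mid k)"
proof (induction k)
  case 0 then show ?case by simp
next
  case (Suc k)
  show ?case
  proof (cases "j = Suc k")
    case False
    then have "j \<le> k" using Suc by simp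
    then have "f (Mid j) \<le> f (Mid k)" using Suc by simp
    moreover have "f (Mid k) < f (Mid (Suc k))" using Cstar_D(3)[OF Suc.prems(1)] Suc.prems \<open>j \<le> k\<close> by auto
    ultimately show ?thesis by simp
  qed simp
qed

lemma Cstar_le_last: "f \<in> Cstar n \<Longrightarrow> x \<in> cells n \<Longrightarrow> x \<noteq> Top \<Longrightarrow> f x \<le> f (Mid n)"
proof -
  assume a: "f \<in> Cstar n" "x \<in> cells n" "x \<noteq> Top"
  then obtain j where j: "1 \<le> j" "j \<le> n" "x = Mid j \<or> x = Bot j" unfolding cells_def by auto
  have "f (Mid j) \<le> f (Mid n)" using Cstar_chain[OF a(1) j(1) j(2)] by simp
  moreover have "f (Bot j) < f (Mid j)" using Cstar_D(3)[OF a(1)] Cstar_D(4)[OF a(1)] j by auto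
  ultimately show ?thesis using j(3) by auto
qed

definition F :: "nat \<Rightarrow> (cell \<Rightarrow> nat) set" where
  "F n = {f \<in> Cstar n. f Top = 2*n+1}"

lemma F_last: assumes "f \<in> F n" "1 \<le> n" shows "f (Mid n) = 2*n"
proof -
  have f: "f \<in> Cstar n" "f Top = 2*n+1" using assms unfolding F_def by auto
  obtain c where c: "c \<in> cells n" "f c = 2*n" using Cstar_surj[OF f(1), of "2*n"] assms(2) by auto
  have "c \<noteq> Top" using c f by auto
  then have "2*n \<le> f (Mid n)" using Cstar_le_last[OF f(1) c(1)] c by simp
  moreover have "f (Mid n) \<le> 2*n+1" using Cstar_val[OF f(1), of "Mid n"] assms by auto
  moreover have "f (Mid n) \<noteq> 2*n+1" using Cstar_inj[OF f(1), of "Mid n" Top] f assms by auto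
  ultimately show ?thesis by simp
qed

lemma F_other: assumes "f \<in> F n" "x \<in> cells n" "x \<noteq> Top" shows "f x \<in> {1..2*n}"
proof -
  have f: "f \<in> Cstar n" "f Top = 2*n+1" using assms unfolding F_def by auto
  have "f x \<noteq> 2*n+1" using Cstar_inj[OF f(1) assms(2), of Top] f assms by auto
  then show ?thesis using Cstar_val[OF f(1) assms(2)] by auto
qed

lemma relabel:
  assumes f: "f \<in> Cstar n" and rng: "\<And>y. y \<in> {1..2*n+1} \<Longrightarrow> \<phi> y \<in> {1..2*n+1}"
  and inj: "inj_on \<phi> {1..2*n+1}"
  and mono: "\<And>a b. a \<in> {1..2*n+1} \<Longrightarrow> b \<in> {1..2*n+1} \<Longrightarrow> a \<noteq> f Top \<Longrightarrow> b \<noteq> f Top \<Longrightarrow> a < b \<Longrightarrow> \<phi> a < \<phi> b"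
  and top: "1 \<le> n \<Longrightarrow> \<phi> (f (Mid 1)) < \<phi> (f Top)"
  shows "restrict (\<phi> \<circ> f) (cells n) \<in> Cstar n"
proof -
  let ?g = "restrict (\<phi> \<circ> f) (cells n)"
  have v: "\<And>x. x \<in> cells n \<Longrightarrow> f x \<in> {1..2*n+1}" using Cstar_val[OF f] .
  have "?g \<in> cells n \<rightarrow>\<^sub>E {1..2*n+1}" using v rng by auto
  moreover have "inj_on ?g (cells n)"
  proof (rule inj_onI)
    fix x y assume xy: "x \<in> cells n" "y \<in> cells n" "?g x = ?g y"
    then have "\<phi> (f x) = \<phi> (f y)" by simp
    then have "f x = f y" using inj v xy by (auto dest: inj_onD)
    then show "x = y" using Cstar_inj[OF f] xy by blast
  qed
  moreover have "\<forall>j\<in>{1..<n}. ?g (Mid j) < ?g (Mid (Suc j))"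
  proof
    fix j assume j: "j \<in> {1..<n}"
    have "f (Mid j) < f (Mid (Suc j))" using Cstar_D(3)[OF f] Cstar_D(4)[OF f] j by auto
    moreover have "f (Mid j) \<noteq> f Top" "f (Mid (Suc j)) \<noteq> f Top"
      using Cstar_inj[OF f, of "Mid j" Top] Cstar_inj[OF f, of "Mid (Suc j)" Top] j by auto
    ultimately show "?g (Mid j) < ?g (Mid (Suc j))" using mono v j by auto
  qed
  moreover have "\<forall>j\<in>{1..n}. ?g (Bot j) < ?g (Mid j)"
  proof
    fix j assume j: "j \<in> {1..n}"
    have "f (Bot j) < f (Mid j)" using Cstar_D(3)[OF f] Cstar_D(4)[OF f] j by auto
    moreover have "f (Bot j) \<noteq> f Top" "f (Mid j) \<noteq> f Top"
      using Cstar_inj[OF f, of "Bot j" Top] Cstar_inj[OF f, of "Mid j" Top] j by auto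
    ultimately show "?g (Bot j) < ?g (Mid j)" using mono v j by auto
  qed
  moreover have "1 \<le> n \<longrightarrow> ?g (Mid 1) < ?g Top" using top by auto
  ultimately show ?thesis by (rule Cstar_intro)
qed

lemma restrict_id_Cstar:
  assumes "f \<in> Cstar n" "\<And>y. y \<in> {1..2*n+1} \<Longrightarrow> \<psi> (\<phi> y) = y"
  shows "restrict (\<psi> \<circ> restrict (\<phi> \<circ> f) (cells n)) (cells n) = f"
proof
  fix x show "restrict (\<psi> \<circ> restrict (\<phi> \<circ> f) (cells n)) (cells n) x = f x"
    using assms Cstar_val[OF assms(1)] Cstar_out[OF assms(1)] by (cases "x \<in> cells n") auto
qed

definition sig :: "nat \<Rightarrow> nat \<Rightarrow> nat \<Rightarrow> nat" where
  "sig n i y = (if y = i then 2*n+1 else if i < y then y - 1 else y)"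
definition tau :: "nat \<Rightarrow> nat \<Rightarrow> nat \<Rightarrow> nat" where
  "tau n i y = (if y = 2*n+1 then i else if i \<le> y then y + 1 else y)"

lemma rot_bij:
  assumes n: "1 \<le> n" and i: "1 \<le> i" "i \<le> 2*n+1"
  shows "bij_betw (\<lambda>f. restrict (sig n i \<circ> f) (cells n)) {f\<in>Cstar n. f Top = i} {f \<in> F n. f (Mid 1) < i}"
proof (rule bij_betw_byWitness[where f'="\<lambda>f. restrict (tau n i \<circ> f) (cells n)"])
  show "\<forall>a\<in>{f \<in> Cstar n. f Top = i}. restrict (tau n i \<circ> restrict (sig n i \<circ> a) (cells n)) (cells n) = a"
    using i by (auto intro!: restrict_id_Cstar simp: sig_def tau_def)
  show "\<forall>a\<in>{f \<in> F n. f (Mid 1) < i}. restrict (sig n i \<circ> restrict (tau n i \<circ> a) (cells n)) (cells n) = a"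
    using i by (auto intro!: restrict_id_Cstar simp: sig_def tau_def F_def)
  show "(\<lambda>f. restrict (sig n i \<circ> f) (cells n)) ` {f \<in> Cstar n. f Top = i} \<subseteq> {f \<in> F n. f (Mid 1) < i}"
  proof (rule image_subsetI)
    fix f assume "f \<in> {f \<in> Cstar n. f Top = i}"
    then have f: "f \<in> Cstar n" "i = f Top" by auto
    have m1: "f (Mid 1) < f Top" using Cstar_D(5)[OF f(1)] n by auto
    have m1v: "f (Mid 1) \<in> {1..2*n+1}" using Cstar_val[OF f(1), of "Mid 1"] n by simp
    have "restrict (sig n i \<circ> f) (cells n) \<in> Cstar n"
    proof (rule relabel[OF f(1)])
      show "\<And>y. y \<in> {1..2 * n + 1} \<Longrightarrow> sig n i y \<in> {1..2 * n + 1}" using i by (auto simp: sig_def)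
      show "inj_on (sig n i) {1..2 * n + 1}" using i by (auto simp: sig_def inj_on_def split: if_splits)
      show "\<And>a b. a \<in> {1..2 * n + 1} \<Longrightarrow> b \<in> {1..2 * n + 1} \<Longrightarrow> a \<noteq> f Top \<Longrightarrow> b \<noteq> f Top \<Longrightarrow> a < b \<Longrightarrow> sig n i a < sig n i b"
        using f by (auto simp: sig_def)
      show "1 \<le> n \<Longrightarrow> sig n i (f (Mid 1)) < sig n i (f Top)" using f m1 m1v Cstar_val[OF f(1), of Top] by (auto simp: sig_def)
    qed
    moreover have "restrict (sig n i \<circ> f) (cells n) Top = 2*n+1" using f by (auto simp: sig_def)
    moreover have "restrict (sig n i \<circ> f) (cells n) (Mid 1) < i" using f m1 n by (simp add: sig_def)
    ultimately show "restrict (sig n i \<circ> f) (cells n) \<in> {f \<in> F n. f (Mid 1) < i}" by (simp add: F_def)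
  qed
  show "(\<lambda>f. restrict (tau n i \<circ> f) (cells n)) ` {f \<in> F n. f (Mid 1) < i} \<subseteq> {f \<in> Cstar n. f Top = i}"
  proof (rule image_subsetI)
    fix f assume "f \<in> {f \<in> F n. f (Mid 1) < i}"
    then have f0: "f \<in> F n" "f (Mid 1) < i" by auto
    have f: "f \<in> Cstar n" "f Top = 2*n+1" using f0 unfolding F_def by auto
    have "restrict (tau n i \<circ> f) (cells n) \<in> Cstar n"
    proof (rule relabel[OF f(1)])
      show "\<And>y. y \<in> {1..2 * n + 1} \<Longrightarrow> tau n i y \<in> {1..2 * n + 1}" using i by (auto simp: tau_def)
      show "inj_on (tau n i) {1..2 * n + 1}" using i by (auto simp: tau_def inj_on_def split: if_splits)
      show "\<And>a b. a \<in> {1..2 * n + 1} \<Longrightarrow> b \<in> {1..2 * n + 1} \<Longrightarrow> a \<noteq> f Top \<Longrightarrow> b \<noteq> f Top \<Longrightarrow> a < b \<Longrightarrow> tau n i a < tau n i b"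
        using f by (auto simp: tau_def)
      show "1 \<le> n \<Longrightarrow> tau n i (f (Mid 1)) < tau n i (f Top)" using f f0 i by (auto simp: tau_def)
    qed
    moreover have "restrict (tau n i \<circ> f) (cells n) Top = i" using f by (simp add: tau_def)
    ultimately show "restrict (tau n i \<circ> f) (cells n) \<in> {f \<in> Cstar n. f Top = i}" by simp
  qed
qed

lemma v_eq: assumes "1 \<le> n" "1 \<le> i" "i \<le> 2*n+1"
  shows "v n i = card {f \<in> F n. f (Mid 1) < i}"
  unfolding v_def using bij_betw_same_card[OF rot_bij[OF assms]] .

lemma v_zero: assumes "i = 0 \<or> i > 2*n+1" shows "v n i = 0"
proof -
  have e: "{f \<in> Cstar n. f Top = i} = {}" using assms Cstar_val[of _ n Top] by fastforce
  show ?thesis unfolding v_def e by simp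
qed

definition ins :: "nat \<Rightarrow> nat \<Rightarrow> nat" where "ins b y = (if y < b then y else Suc y)"
definition del :: "nat \<Rightarrow> nat \<Rightarrow> nat" where "del b y = (if y < b then y else y - 1)"

definition Phi :: "nat \<Rightarrow> (cell \<Rightarrow> nat) \<times> nat \<Rightarrow> cell \<Rightarrow> nat" where
 "Phi m gb x = (case gb of (g,b) \<Rightarrow> if x = Top then 2*m+3 else if x = Mid (Suc m) then 2*m+2
     else if x = Bot (Suc m) then b else if x \<in> cells m then ins b (g x) else undefined)"

definition Psi :: "nat \<Rightarrow> (cell \<Rightarrow> nat) \<Rightarrow> (cell \<Rightarrow> nat) \<times> nat" where
 "Psi m f = ((\<lambda>x. if x = Top then 2*m+1 else if x \<in> cells m then del (f (Bot (Suc m))) (f x) else undefined),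
     f (Bot (Suc m)))"

lemma ins_mono: "y < z \<Longrightarrow> ins b y < ins b z" by (simp add: ins_def)
lemma del_mono: "y < z \<Longrightarrow> y \<noteq> b \<Longrightarrow> z \<noteq> b \<Longrightarrow> del b y < del b z" by (auto simp: del_def)

lemma notin_cells_Suc: "Mid (Suc m) \<notin> cells m" "Bot (Suc m) \<notin> cells m" by auto

lemma Phi_in:
  assumes g: "g \<in> F m" and b: "b \<in> {1..2*m+1}"
  shows "Phi m (g,b) \<in> F (Suc m)"
proof -
  let ?h = "Phi m (g,b)"
  have gC: "g \<in> Cstar m" "g Top = 2*m+1" using g unfolding F_def by auto
  have hc: "?h x = ins b (g x)" if "x \<in> cells m" "x \<noteq> Top" for x
    using that notin_cells_Suc by (auto simp: Phi_def)
  have hv: "?h x \<in> {1..2*m+1} \<and> ?h x \<noteq> b" if "x \<in> cells m" "x \<noteq> Top" for x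
    using hc[OF that] F_other[OF g that] b by (auto simp: ins_def)
  have hT: "?h Top = 2*m+3" "?h (Mid (Suc m)) = 2*m+2" "?h (Bot (Suc m)) = b"
    by (auto simp: Phi_def)
  have "?h \<in> cells (Suc m) \<rightarrow>\<^sub>E {1..2*Suc m+1}"
  proof (rule PiE_I)
    fix x assume x: "x \<in> cells (Suc m)"
    show "?h x \<in> {1..2*Suc m+1}"
    proof (cases "x = Top \<or> x = Mid (Suc m) \<or> x = Bot (Suc m)")
      case True then show ?thesis using hT b by auto
    next
      case False then have "x \<in> cells m" using x cells_Suc by auto
      then show ?thesis using hv False by fastforce
    qed
  next
    fix x assume x: "x \<notin> cells (Suc m)"
    then show "?h x = undefined" using cells_Suc[of m] by (auto simp: Phi_def)
  qed
  moreover have "inj_on ?h (cells (Suc m))"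
  proof (rule inj_onI)
    fix x y assume x: "x \<in> cells (Suc m)" and y: "y \<in> cells (Suc m)" and e: "?h x = ?h y"
    have xc: "x = Top \<or> x = Mid (Suc m) \<or> x = Bot (Suc m) \<or> (x \<in> cells m \<and> x \<noteq> Top)"
      using x cells_Suc by auto
    have yc: "y = Top \<or> y = Mid (Suc m) \<or> y = Bot (Suc m) \<or> (y \<in> cells m \<and> y \<noteq> Top)"
      using y cells_Suc by auto
    show "x = y"
    proof (cases "x \<in> cells m \<and> x \<noteq> Top \<and> y \<in> cells m \<and> y \<noteq> Top")
      case True
      have "ins b (g x) = ins b (g y)" using e hc True by simp
      then have "g x = g y" by (auto simp: ins_def split: if_splits)
      then show "x = y" using Cstar_inj[OF gC(1)] True by blast
    next
      case False
      show ?thesis using xc yc False e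
      proof (elim disjE)
      qed (use hT hv[of x] hv[of y] b in auto)
    qed
  qed
  moreover have "\<forall>j\<in>{1..<Suc m}. ?h (Mid j) < ?h (Mid (Suc j))"
  proof
    fix j assume j: "j \<in> {1..<Suc m}"
    show "?h (Mid j) < ?h (Mid (Suc j))"
    proof (cases "j = m")
      case True
      then show ?thesis using hv[of "Mid j"] hT j by auto
    next
      case False
      then have "g (Mid j) < g (Mid (Suc j))" using Cstar_D(3)[OF gC(1)] Cstar_D(4)[OF gC(1)] j by auto
      then show ?thesis using hc[of "Mid j"] hc[of "Mid (Suc j)"] j False ins_mono by auto
    qed
  qed
  moreover have "\<forall>j\<in>{1..Suc m}. ?h (Bot j) < ?h (Mid j)"
  proof
    fix j assume j: "j \<in> {1..Suc m}"
    show "?h (Bot j) < ?h (Mid j)"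
    proof (cases "j = Suc m")
      case True
      then show ?thesis using hT b by auto
    next
      case False
      then have "g (Bot j) < g (Mid j)" using Cstar_D(3)[OF gC(1)] Cstar_D(4)[OF gC(1)] j by auto
      then show ?thesis using hc[of "Mid j"] hc[of "Bot j"] j False ins_mono by auto
    qed
  qed
  moreover have "1 \<le> Suc m \<longrightarrow> ?h (Mid 1) < ?h Top"
  proof (cases "m = 0")
    case True then show ?thesis using hT by auto
  next
    case False then show ?thesis using hv[of "Mid 1"] hT by auto
  qed
  ultimately have "?h \<in> Cstar (Suc m)" by (rule Cstar_intro)
  then show ?thesis using hT(1) by (simp add: F_def)
qed

lemma Psi_in:
  assumes f: "f \<in> F (Suc m)"
  shows "Psi m f \<in> F m \<times> {1..2*m+1}"
proof -
  have fC: "f \<in> Cstar (Suc m)" "f Top = 2*m+3" using f unfolding F_def by auto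
  have fM: "f (Mid (Suc m)) = 2*m+2" using F_last[OF f] by simp
  define b where "b = f (Bot (Suc m))"
  have bv: "b \<in> {1..2*m+1}"
  proof -
    have "b \<in> {1..2*m+2}" using F_other[OF f, of "Bot (Suc m)"] b_def by auto
    moreover have "b \<noteq> 2*m+2" using Cstar_inj[OF fC(1), of "Bot (Suc m)" "Mid (Suc m)"] fM b_def by auto
    ultimately show ?thesis by auto
  qed
  let ?g = "fst (Psi m f)"
  have fo: "f x \<in> {1..2*m+1} \<and> f x \<noteq> b" if "x \<in> cells m" "x \<noteq> Top" for x
  proof -
    have xs: "x \<in> cells (Suc m)" using that cells_Suc by auto
    have "f x \<in> {1..2*m+2}" using F_other[OF f xs that(2)] by auto
    moreover have "f x \<noteq> 2*m+2" using Cstar_inj[OF fC(1) xs, of "Mid (Suc m)"] fM that notin_cells_Suc by auto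
    moreover have "f x \<noteq> b" using Cstar_inj[OF fC(1) xs, of "Bot (Suc m)"] b_def that notin_cells_Suc by auto
    ultimately show ?thesis by auto
  qed
  have gc: "?g x = del b (f x)" if "x \<in> cells m" "x \<noteq> Top" for x
    using that by (simp add: Psi_def b_def)
  have gv: "?g x \<in> {1..2*m}" if "x \<in> cells m" "x \<noteq> Top" for x
    using gc[OF that] fo[OF that] bv by (auto simp: del_def)
  have gT: "?g Top = 2*m+1" by (simp add: Psi_def)
  have "?g \<in> cells m \<rightarrow>\<^sub>E {1..2*m+1}"
  proof (rule PiE_I)
    fix x assume x: "x \<in> cells m"
    show "?g x \<in> {1..2*m+1}" using gv[OF x] gT by (cases "x = Top") auto
  next
    fix x assume "x \<notin> cells m" then show "?g x = undefined" by (auto simp: Psi_def)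
  qed
  moreover have "inj_on ?g (cells m)"
  proof (rule inj_onI)
    fix x y assume x: "x \<in> cells m" and y: "y \<in> cells m" and e: "?g x = ?g y"
    show "x = y"
    proof (cases "x = Top \<or> y = Top")
      case True then show ?thesis using gv x y e gT by fastforce
    next
      case False
      then have "del b (f x) = del b (f y)" using gc x y e by auto
      then have "f x = f y" using fo[of x] fo[of y] x y False by (auto simp: del_def split: if_splits)
      then show ?thesis using Cstar_inj[OF fC(1), of x y] x y cells_Suc by auto
    qed
  qed
  moreover have "\<forall>j\<in>{1..<m}. ?g (Mid j) < ?g (Mid (Suc j))"
  proof
    fix j assume j: "j \<in> {1..<m}"
    have "f (Mid j) < f (Mid (Suc j))" using Cstar_D(3)[OF fC(1)] Cstar_D(4)[OF fC(1)] j by auto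
    then show "?g (Mid j) < ?g (Mid (Suc j))" using gc[of "Mid j"] gc[of "Mid (Suc j)"] fo[of "Mid j"] fo[of "Mid (Suc j)"] j del_mono by auto
  qed
  moreover have "\<forall>j\<in>{1..m}. ?g (Bot j) < ?g (Mid j)"
  proof
    fix j assume j: "j \<in> {1..m}"
    have "f (Bot j) < f (Mid j)" using Cstar_D(3)[OF fC(1)] Cstar_D(4)[OF fC(1)] j by auto
    then show "?g (Bot j) < ?g (Mid j)" using gc[of "Mid j"] gc[of "Bot j"] fo[of "Mid j"] fo[of "Bot j"] j del_mono by auto
  qed
  moreover have "1 \<le> m \<longrightarrow> ?g (Mid 1) < ?g Top" using gv[of "Mid 1"] gT by auto
  ultimately have "?g \<in> Cstar m" by (rule Cstar_intro)
  then have "?g \<in> F m" using gT by (simp add: F_def)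
  moreover have "snd (Psi m f) = b" by (simp add: Psi_def b_def)
  ultimately show ?thesis using bv by (metis mem_Times_iff)
qed

lemma Phi_bij: "bij_betw (Phi m) (F m \<times> {1..2*m+1}) (F (Suc m))"
proof (rule bij_betw_byWitness[where f'="Psi m"])
  show "\<forall>a\<in>F m \<times> {1..2 * m + 1}. Psi m (Phi m a) = a"
  proof
    fix a assume a: "a \<in> F m \<times> {1..2 * m + 1}"
    obtain g b where gb: "a = (g,b)" "g \<in> F m" "b \<in> {1..2*m+1}" using a by auto
    have gC: "g \<in> Cstar m" "g Top = 2*m+1" using gb unfolding F_def by auto
    have "fst (Psi m (Phi m (g,b))) = g"
    proof
      fix x
      show "fst (Psi m (Phi m (g,b))) x = g x"
      proof (cases "x \<in> cells m")
        case True
        then show ?thesis using gC notin_cells_Suc F_other[OF gb(2) True]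
          by (auto simp: Psi_def Phi_def ins_def del_def)
      next
        case False
        then show ?thesis using Cstar_out[OF gC(1) False] by (auto simp: Psi_def)
      qed
    qed
    moreover have "snd (Psi m (Phi m (g,b))) = b" by (simp add: Psi_def Phi_def)
    ultimately show "Psi m (Phi m a) = a" using gb by (metis prod.collapse)
  qed
  show "\<forall>a'\<in>F (Suc m). Phi m (Psi m a') = a'"
  proof
    fix f assume f: "f \<in> F (Suc m)"
    have fC: "f \<in> Cstar (Suc m)" "f Top = 2*m+3" using f unfolding F_def by auto
    have fM: "f (Mid (Suc m)) = 2*m+2" using F_last[OF f] by simp
    show "Phi m (Psi m f) = f"
    proof
      fix x
      show "Phi m (Psi m f) x = f x"
      proof (cases "x = Top \<or> x = Mid (Suc m) \<or> x = Bot (Suc m)")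
        case True then show ?thesis using fC fM by (auto simp: Phi_def Psi_def)
      next
        case False
        show ?thesis
        proof (cases "x \<in> cells m")
          case True
          have xs: "x \<in> cells (Suc m)" using True cells_Suc by auto
          have "f x \<noteq> f (Bot (Suc m))" using Cstar_inj[OF fC(1) xs, of "Bot (Suc m)"] False by auto
          then show ?thesis using True False by (auto simp: Phi_def Psi_def ins_def del_def)
        next
          case c: False
          then have "x \<notin> cells (Suc m)" using False cells_Suc by auto
          then show ?thesis using c False Cstar_out[OF fC(1)] by (auto simp: Phi_def Psi_def)
        qed
      qed
    qed
  qed
  show "Phi m ` (F m \<times> {1..2 * m + 1}) \<subseteq> F (Suc m)" by (rule image_subsetI) (metis SigmaE Phi_in)
  show "Psi m ` F (Suc m) \<subseteq> F m \<times> {1..2 * m + 1}" by (rule image_subsetI) (rule Psi_in)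
qed




definition CC :: "nat \<Rightarrow> nat" where "CC n = card (F n)"
definition SS :: "nat \<Rightarrow> nat" where "SS n = (\<Sum>f\<in>F n. f (Mid 1))"

lemma finite_F: "finite (F n)"
  using finite_Cstar[of n] unfolding F_def by simp

lemma CC_Suc: "CC (Suc m) = CC m * (2*m+1)"
  unfolding CC_def using bij_betw_same_card[OF Phi_bij[of m]] by (simp add: card_cartesian_product)

lemma cells_0: "cells 0 = {Top}" by (simp add: cells_def)

lemma F0_ne: "F 0 \<noteq> {}"
proof -
  let ?e = "\<lambda>x::cell. if x = Top then 1::nat else undefined"
  have "?e \<in> Cstar 0"
  proof (rule Cstar_intro)
    show "?e \<in> cells 0 \<rightarrow>\<^sub>E {1..2*0+1}" unfolding cells_0 by (rule PiE_I) auto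
    show "inj_on ?e (cells 0)" unfolding cells_0 by simp
  qed auto
  then have "?e \<in> F 0" by (simp add: F_def)
  then show ?thesis by blast
qed

lemma CC_pos: "CC n > 0"
proof (induction n)
  case 0 then show ?case using F0_ne finite_F[of 0] by (simp add: CC_def card_gt_0_iff)
next
  case (Suc n) then show ?case by (simp add: CC_Suc)
qed

lemma sum_ins: "(\<Sum>b\<in>{1..K}. ins b y) = K * y + min K y"
proof (induction K)
  case 0 then show ?case by simp
next
  case (Suc K)
  have "(\<Sum>b\<in>{1..Suc K}. ins b y) = (\<Sum>b\<in>{1..K}. ins b y) + ins (Suc K) y"
    by (simp add: sum.cl_ivl_Suc)
  also have "\<dots> = Suc K * y + min (Suc K) y" using Suc by (simp add: ins_def min_def)
  finally show ?case .
qed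

lemma SS_Suc: assumes "1 \<le> m" shows "SS (Suc m) = 2 * Suc m * SS m"
proof -
  have "SS (Suc m) = (\<Sum>a\<in>F m \<times> {1..2*m+1}. Phi m a (Mid 1))"
    unfolding SS_def using sum.reindex_bij_betw[OF Phi_bij[of m], of "\<lambda>f. f (Mid 1)"] by simp
  also have "\<dots> = (\<Sum>g\<in>F m. \<Sum>b\<in>{1..2*m+1}. Phi m (g,b) (Mid 1))"
    by (simp only: sum.cartesian_product split_def prod.collapse)
  also have "\<dots> = (\<Sum>g\<in>F m. \<Sum>b\<in>{1..2*m+1}. ins b (g (Mid 1)))"
    using assms by (intro sum.cong refl) (simp add: Phi_def)
  also have "\<dots> = (\<Sum>g\<in>F m. 2 * Suc m * g (Mid 1))"
  proof (intro sum.cong refl)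
    fix g assume g: "g \<in> F m"
    have "g (Mid 1) \<in> {1..2*m}" using F_other[OF g, of "Mid 1"] assms by simp
    then show "(\<Sum>b\<in>{1..2*m+1}. ins b (g (Mid 1))) = 2 * Suc m * g (Mid 1)"
      unfolding sum_ins by (simp add: min_def)
  qed
  also have "\<dots> = 2 * Suc m * SS m" by (simp add: SS_def sum_distrib_left)
  finally show ?thesis .
qed

lemma SS_1: "SS 1 = 2 * CC 1"
proof -
  have "SS 1 = (\<Sum>a\<in>F 0 \<times> {1..1::nat}. Phi 0 a (Mid 1))"
    unfolding SS_def using sum.reindex_bij_betw[OF Phi_bij[of 0], of "\<lambda>f. f (Mid 1)"] by simp
  also have "\<dots> = (\<Sum>a\<in>F 0 \<times> {1..1::nat}. (2::nat))"
    by (intro sum.cong refl) (auto simp: Phi_def)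
  also have "\<dots> = 2 * CC 0" by (simp add: CC_def card_cartesian_product)
  finally show ?thesis using CC_Suc[of 0] by simp
qed

lemma SS_bound: "1 \<le> n \<Longrightarrow> SS n ^ 2 \<le> 4 * n * CC n ^ 2"
proof (induction n rule: dec_induct)
  case base then show ?case using SS_1 by (simp add: power2_eq_square)
next
  case (step n)
  have "SS (Suc n) ^ 2 = (2 * Suc n) ^ 2 * SS n ^ 2" unfolding SS_Suc[OF step(1)] by (simp only: power_mult_distrib)
  also have "\<dots> \<le> (2 * Suc n) ^ 2 * (4 * n * CC n ^ 2)" using step(3) by (rule mult_left_mono) simp
  also have "\<dots> = 4 * Suc n * ((4 * n * Suc n) * CC n ^ 2)" by (simp add: power2_eq_square algebra_simps)
  also have "\<dots> \<le> 4 * Suc n * ((2*n+1)^2 * CC n ^ 2)"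
    by (intro mult_left_mono) (auto simp: power2_eq_square algebra_simps)
  also have "\<dots> = 4 * Suc n * CC (Suc n) ^ 2" by (metis CC_Suc mult.commute power_mult_distrib)
  finally show ?case .
qed

lemma card_gt: "card {i\<in>{1..K}. (p::nat) < i} = K - p"
proof -
  have "{i\<in>{1..K}. p < i} = {Suc p..K}" by auto
  then show ?thesis by simp
qed

lemma sum_ind: "(\<Sum>i\<in>{1..K}. if (p::nat) < i then 1 else 0) = (K - p :: nat)"
proof -
  have "(\<Sum>i\<in>{1..K}. if (p::nat) < i then 1 else 0) = card {i\<in>{1..K}. p < i}"
    unfolding card_eq_sum by (rule sum.inter_filter[symmetric]) simp
  then show ?thesis using card_gt by simp
qed

lemma sum_v: assumes "1 \<le> n" "K \<le> 2*n+1"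
  shows "(\<Sum>i\<in>{1..K}. v n i) = (\<Sum>f\<in>F n. K - f (Mid 1))"
proof -
  have "(\<Sum>i\<in>{1..K}. v n i) = (\<Sum>i\<in>{1..K}. \<Sum>f\<in>F n. if f (Mid 1) < i then 1 else 0)"
  proof (intro sum.cong refl)
    fix i assume i: "i \<in> {1..K}"
    have "v n i = card {f \<in> F n. f (Mid 1) < i}" using v_eq[OF assms(1)] i assms(2) by auto
    also have "\<dots> = (\<Sum>f\<in>F n. if f (Mid 1) < i then 1 else 0)"
      using sum.inter_filter[OF finite_F, where g="\<lambda>_. 1::nat" and P="\<lambda>f. f (Mid 1) < i"] by simp
    finally show "v n i = (\<Sum>f\<in>F n. if f (Mid 1) < i then 1 else 0)" .
  qed
  also have "\<dots> = (\<Sum>f\<in>F n. \<Sum>i\<in>{1..K}. if f (Mid 1) < i then 1 else 0)" by (rule sum.swap)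
  also have "\<dots> = (\<Sum>f\<in>F n. K - f (Mid 1))" by (simp only: sum_ind)
  finally show ?thesis .
qed

lemma sum_v_bounds: assumes "1 \<le> n" "K \<le> 2*n+1"
  shows "real K * CC n - SS n \<le> (\<Sum>i\<in>{1..K}. v n i)" "(\<Sum>i\<in>{1..K}. v n i) \<le> real K * CC n"
proof -
  have e: "real (\<Sum>i\<in>{1..K}. v n i) = (\<Sum>f\<in>F n. real (K - f (Mid 1)))"
    using sum_v[OF assms] by simp
  have "(\<Sum>f\<in>F n. real K - real (f (Mid 1))) \<le> (\<Sum>f\<in>F n. real (K - f (Mid 1)))"
    by (intro sum_mono) linarith
  moreover have "(\<Sum>f\<in>F n. real K - real (f (Mid 1))) = real K * CC n - SS n"
    by (simp add: sum_subtractf CC_def SS_def)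
  ultimately show "real K * CC n - SS n \<le> (\<Sum>i\<in>{1..K}. v n i)" using e by simp
  have "(\<Sum>f\<in>F n. real (K - f (Mid 1))) \<le> (\<Sum>f\<in>F n. real K)"
    by (intro sum_mono) simp
  then show "(\<Sum>i\<in>{1..K}. v n i) \<le> real K * CC n" using e by (simp add: CC_def mult.commute)
qed

lemma SS_real: assumes "1 \<le> n" shows "real (SS n) \<le> 2 * sqrt (real n) * CC n"
proof -
  have "real (SS n) ^ 2 \<le> (2 * sqrt (real n) * CC n) ^ 2"
    using SS_bound[OF assms] by (simp add: power_mult_distrib) (metis of_nat_le_iff of_nat_mult of_nat_power of_nat_numeral)
  then show ?thesis by (rule power2_le_imp_le) simp
qed




definition TT :: "nat \<Rightarrow> nat" where "TT n = (\<Sum>i\<in>{1..2*n+1}. v n i)"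

lemma sum_v_restrict: assumes "finite A"
  shows "(\<Sum>m\<in>A. v n m) = (\<Sum>m\<in>A \<inter> {1..2*n+1}. v n m)"
proof (rule sum.mono_neutral_right)
  show "\<forall>i\<in>A - A \<inter> {1..2 * n + 1}. v n i = 0"
  proof
    fix i assume "i \<in> A - A \<inter> {1..2 * n + 1}"
    then have "i = 0 \<or> i > 2*n+1" by auto
    then show "v n i = 0" by (rule v_zero)
  qed
qed (use assms in auto)

lemma V1_eq: "V1_coeff n = real (TT n) / fact n"
proof -
  have "V1_coeff n = (\<Sum>i\<le>2*n+1. real (v n i)) / fact n"
    unfolding V1_coeff_def V_coeff_def by (rule sum_divide_distrib[symmetric])
  moreover have "(\<Sum>i\<le>2*n+1. v n i) = TT n"
  proof -
    have "{..2*n+1} \<inter> {1..2*n+1} = {1..2*n+1}" by auto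
    then show ?thesis unfolding TT_def by (subst sum_v_restrict) simp_all
  qed
  ultimately show ?thesis by (metis of_nat_sum)
qed

lemma q_eq: "V_coeff n m / V1_coeff n = real (v n m) / real (TT n)"
  unfolding V1_eq V_coeff_def by (simp add: field_simps)

lemma TT_bounds: assumes "1 \<le> n"
  shows "real (2*n+1) * CC n - SS n \<le> TT n" "TT n \<le> real (2*n+1) * CC n"
  using sum_v_bounds[OF assms, of "2*n+1"] unfolding TT_def by auto

lemma measure_Z_law: assumes "finite A"
  shows "measure (Z_law n) A = (\<Sum>m\<in>A. real (v n m)) / real (TT n)"
proof -
  have nn: "\<And>m. 0 \<le> V_coeff n m / V1_coeff n" using q_eq by simp
  have "emeasure (Z_law n) A = (\<integral>\<^sup>+x. ennreal (V_coeff n x / V1_coeff n) * indicator A x \<partial>count_space UNIV)"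
    unfolding Z_law_def by (rule emeasure_density) auto
  also have "\<dots> = (\<integral>\<^sup>+x. ennreal (V_coeff n x / V1_coeff n) \<partial>count_space A)"
    by (rule nn_integral_count_space_indicator[symmetric]) simp
  also have "\<dots> = (\<Sum>m\<in>A. ennreal (V_coeff n m / V1_coeff n))"
    by (rule nn_integral_count_space_finite[OF assms])
  also have "\<dots> = ennreal (\<Sum>m\<in>A. V_coeff n m / V1_coeff n)"
    using nn by simp
  finally have "measure (Z_law n) A = (\<Sum>m\<in>A. V_coeff n m / V1_coeff n)"
    unfolding measure_def using nn by (simp add: sum_nonneg)
  also have "\<dots> = (\<Sum>m\<in>A. real (v n m)) / real (TT n)"
    unfolding q_eq by (simp add: sum_divide_distrib)
  finally show ?thesis .
qed

lemma cdf_Z: assumes "1 \<le> n"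
  shows "cdf (Z_scaled_law n) x = (if x < 0 then 0 else
     real (\<Sum>m\<in>{1..min (nat \<lfloor>2 * real n * x\<rfloor>) (2*n+1)}. v n m) / real (TT n))"
proof -
  let ?h = "\<lambda>m::nat. real m / (2 * real n)"
  have "cdf (Z_scaled_law n) x = measure (Z_law n) (?h -` {..x} \<inter> space (Z_law n))"
    unfolding cdf_def2 Z_scaled_law_def by (rule measure_distr) (auto simp: Z_law_def)
  also have "?h -` {..x} \<inter> space (Z_law n) = {m. real m \<le> 2 * real n * x}"
  proof -
    have "space (Z_law n) = UNIV" by (simp add: Z_law_def)
    moreover have "real m / (2 * real n) \<le> x \<longleftrightarrow> real m \<le> 2 * real n * x" for m
      using assms by (simp add: pos_divide_le_eq mult.commute)
    ultimately show ?thesis by auto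
  qed
  finally have e: "cdf (Z_scaled_law n) x = measure (Z_law n) {m. real m \<le> 2 * real n * x}" .
  show ?thesis
  proof (cases "x < 0")
    case True
    have neg: "2 * real n * x < 0" using assms True by (simp add: mult_pos_neg)
    have "\<not> real m \<le> 2 * real n * x" for m
    proof -
      have "real m \<ge> 0" by simp
      with neg show ?thesis by linarith
    qed
    then have "{m. real m \<le> 2 * real n * x} = {}" by blast
    then show ?thesis using e True by simp
  next
    case False
    have s: "{m. real m \<le> 2 * real n * x} = {..nat \<lfloor>2 * real n * x\<rfloor>}"
    proof -
      have c: "0 \<le> 2 * real n * x" using False by simp
      then have fl: "0 \<le> \<lfloor>2 * real n * x\<rfloor>" by simp
      have "real m \<le> 2 * real n * x \<longleftrightarrow> m \<le> nat \<lfloor>2 * real n * x\<rfloor>" for m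
        using le_floor_iff[of "int m" "2 * real n * x"] le_nat_iff[OF fl, of m] by simp
      then show ?thesis by auto
    qed
    have "measure (Z_law n) {..nat \<lfloor>2 * real n * x\<rfloor>} = (\<Sum>m\<in>{..nat \<lfloor>2 * real n * x\<rfloor>}. real (v n m)) / real (TT n)"
      by (rule measure_Z_law) simp
    moreover have "(\<Sum>m\<in>{..nat \<lfloor>2 * real n * x\<rfloor>}. v n m) = (\<Sum>m\<in>{1..min (nat \<lfloor>2 * real n * x\<rfloor>) (2*n+1)}. v n m)"
    proof -
      have "{..nat \<lfloor>2 * real n * x\<rfloor>} \<inter> {1..2*n+1} = {1..min (nat \<lfloor>2 * real n * x\<rfloor>) (2*n+1)}" by auto
      then show ?thesis by (subst sum_v_restrict) simp_all
    qed
    ultimately show ?thesis using e s False by (metis of_nat_sum)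
  qed
qed

lemma cdf_unif: "cdf (uniform_measure lborel {0..1::real}) x = (if x < 0 then 0 else if x \<le> 1 then x else 1)"
proof -
  have "cdf (uniform_measure lborel {0..1::real}) x = measure lborel ({0..1} \<inter> {..x}) / measure lborel {0..1::real}"
    unfolding cdf_def2 by (rule measure_uniform_measure) auto
  also have "\<dots> = (if x < 0 then 0 else if x \<le> 1 then x else 1)"
  proof -
    have "x < 0 \<Longrightarrow> {0..1} \<inter> {..x} = {}" by auto
    moreover have "0 \<le> x \<Longrightarrow> x \<le> 1 \<Longrightarrow> {0..1} \<inter> {..x} = {0..x}" by auto
    moreover have "1 < x \<Longrightarrow> {0..1} \<inter> {..x} = {0..1::real}" by auto
    ultimately show ?thesis by auto
  qed
  finally show ?thesis .
qed

lemma moment: "(\<integral>x. x ^ r \<partial>uniform_measure lborel {0..1::real}) = 1 / (real r + 1)"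
proof -
  have u: "uniform_measure lborel {0..1::real} = density lborel (\<lambda>x. ennreal (indicator {0..1} x))"
    unfolding uniform_measure_def by (intro arg_cong[where f="density lborel"]) (auto simp: indicator_def)
  have "(\<integral>x. x ^ r \<partial>uniform_measure lborel {0..1::real}) = (\<integral>x. indicator {0..1} x *\<^sub>R x ^ r \<partial>lborel)"
    unfolding u by (rule integral_density) auto
  also have "\<dots> = (\<integral>x. x ^ r * indicator {0..1} x \<partial>lborel)"
    by (simp add: mult.commute)
  also have "\<dots> = 1 / (real r + 1)" by (subst integral_power) auto
  finally show ?thesis .
qed




lemma ratio_bounds:
  fixes P T C S K N :: real
  assumes C: "C > 0" and S: "0 \<le> S" "S \<le> 2 * sqrt N * C" and P: "K * C - S \<le> P" "P \<le> K * C" "0 \<le> P"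
    and T: "(2*N+1) * C - S \<le> T" "T \<le> (2*N+1) * C" and N: "N \<ge> 1" and K: "K \<ge> 0"
  shows "(K - 2 * sqrt N) / (2*N+1) \<le> P / T" "P / T \<le> K / (2*N+1 - 2 * sqrt N)" "T > 0"
proof -
  have s1: "1 \<le> sqrt N" using N by simp
  have "sqrt N * 1 \<le> sqrt N * sqrt N" using s1 by (intro mult_left_mono) auto
  then have sq: "sqrt N \<le> N" using N by simp
  define d where "d = 2*N+1 - 2 * sqrt N"
  have d: "d > 0" using sq unfolding d_def by simp
  have dC: "d * C \<le> T" using T S unfolding d_def by (simp add: algebra_simps)
  have "d * C > 0" using d C by simp
  then show Tpos: "T > 0" using dC by linarith
  have "(K - 2 * sqrt N) / (2*N+1) = (K * C - 2 * sqrt N * C) / ((2*N+1) * C)"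
  proof -
    have "(K * C - 2 * sqrt N * C) / ((2*N+1) * C) = ((K - 2 * sqrt N) * C) / ((2*N+1) * C)"
      by (simp add: algebra_simps)
    also have "\<dots> = (K - 2 * sqrt N) / (2*N+1)" using C by simp
    finally show ?thesis by simp
  qed
  also have "\<dots> \<le> P / ((2*N+1) * C)"
    using S P C N by (intro divide_right_mono) auto
  also have "\<dots> \<le> P / T"
    using P T Tpos by (intro divide_left_mono) auto
  finally show "(K - 2 * sqrt N) / (2*N+1) \<le> P / T" .
  have "P / T \<le> K * C / T" using P Tpos by (intro divide_right_mono) auto
  also have "\<dots> \<le> K * C / (d * C)" using dC d C K Tpos by (intro divide_left_mono) auto
  also have "\<dots> = K / d" using C by simp
  finally show "P / T \<le> K / (2*N+1 - 2 * sqrt N)" unfolding d_def .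
qed

lemma lim1: "(\<lambda>n. 2 * real (Suc n) / (2 * real (Suc n) + 1)) \<longlonglongrightarrow> 1"
  by real_asymp
lemma lim2: "(\<lambda>n. (1 + 2 * sqrt (real (Suc n))) / (2 * real (Suc n) + 1)) \<longlonglongrightarrow> 0"
  by real_asymp
lemma lim3: "(\<lambda>n. 2 * real (Suc n) / (2 * real (Suc n) + 1 - 2 * sqrt (real (Suc n)))) \<longlonglongrightarrow> 1"
  by real_asymp

lemma cdf_bounds:
  fixes x :: real and n :: nat
  assumes x: "0 \<le> x"
  shows "(real (min (nat \<lfloor>2 * real (Suc n) * x\<rfloor>) (2*Suc n+1)) - 2 * sqrt (real (Suc n))) / (2*real (Suc n)+1)
           \<le> cdf (Z_scaled_law (Suc n)) x"
    "cdf (Z_scaled_law (Suc n)) x \<le> real (min (nat \<lfloor>2 * real (Suc n) * x\<rfloor>) (2*Suc n+1)) / (2*real (Suc n)+1 - 2 * sqrt (real (Suc n)))"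
    "cdf (Z_scaled_law (Suc n)) x \<le> 1"
proof -
  define K where "K = min (nat \<lfloor>2 * real (Suc n) * x\<rfloor>) (2*Suc n+1)"
  have K: "K \<le> 2 * Suc n + 1" unfolding K_def by simp
  have e: "cdf (Z_scaled_law (Suc n)) x = real (\<Sum>m\<in>{1..K}. v (Suc n) m) / real (TT (Suc n))"
    using cdf_Z[of "Suc n" x] x unfolding K_def by simp
  have n1: "1 \<le> Suc n" by simp
  note sb = sum_v_bounds[OF n1 K]
  note tb = TT_bounds[OF n1]
  have C: "real (CC (Suc n)) > 0" using CC_pos by simp
  have S: "real (SS (Suc n)) \<le> 2 * sqrt (real (Suc n)) * real (CC (Suc n))" using SS_real[OF n1] .
  have tb1: "(2 * real (Suc n) + 1) * real (CC (Suc n)) - real (SS (Suc n)) \<le> real (TT (Suc n))"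
    using tb(1) by simp
  have tb2: "real (TT (Suc n)) \<le> (2 * real (Suc n) + 1) * real (CC (Suc n))"
    using tb(2) by simp
  have P0: "0 \<le> real (\<Sum>m\<in>{1..K}. v (Suc n) m)" by (rule of_nat_0_le_iff)
  have S0: "0 \<le> real (SS (Suc n))" by (rule of_nat_0_le_iff)
  have N1: "1 \<le> real (Suc n)" by simp
  have K0: "0 \<le> real K" by (rule of_nat_0_le_iff)
  note rb' = ratio_bounds[OF C S0 S sb(1) sb(2) P0 tb1 tb2 N1 K0]
  show "(real K - 2 * sqrt (real (Suc n))) / (2*real (Suc n)+1) \<le> cdf (Z_scaled_law (Suc n)) x"
    using rb'(1) e by simp
  show "cdf (Z_scaled_law (Suc n)) x \<le> real K / (2*real (Suc n)+1 - 2 * sqrt (real (Suc n)))"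
    using rb'(2) e by simp
  have "(\<Sum>m\<in>{1..K}. v (Suc n) m) \<le> TT (Suc n)"
    unfolding TT_def using K by (intro sum_mono2) auto
  then have h: "real (\<Sum>m\<in>{1..K}. v (Suc n) m) \<le> real (TT (Suc n))" by (rule of_nat_mono)
  show "cdf (Z_scaled_law (Suc n)) x \<le> 1" unfolding e using divide_le_eq_1_pos[OF rb'(3)] h by blast
qed

lemma dpos: "2*real (Suc n)+1 - 2* sqrt (real (Suc n)) > 0"
proof -
  have N: "1 \<le> real (Suc n)" by simp
  have s1: "1 \<le> sqrt (real (Suc n))" using N by simp
  have "sqrt (real (Suc n)) * 1 \<le> sqrt (real (Suc n)) * sqrt (real (Suc n))" using s1 by (intro mult_left_mono) auto
  then have "sqrt (real (Suc n)) \<le> real (Suc n)" by simp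
  then show ?thesis by simp
qed

lemma alg: "(D::real) > 0 \<Longrightarrow> c * (A / D) - B / D = (A * c - B) / D"
  by (simp add: field_simps)

lemma K_props:
  fixes x :: real assumes "0 \<le> x"
  shows "real (min (nat \<lfloor>2 * real (Suc n) * x\<rfloor>) (2*Suc n+1)) \<ge> min (2 * real (Suc n) * x - 1) (2 * real (Suc n) + 1)"
    "real (min (nat \<lfloor>2 * real (Suc n) * x\<rfloor>) (2*Suc n+1)) \<le> 2 * real (Suc n) * x"
proof -
  let ?y = "2 * real (Suc n) * x"
  have y0: "0 \<le> ?y" using assms by simp
  then have f0: "0 \<le> \<lfloor>?y\<rfloor>" by simp
  have r: "real (nat \<lfloor>?y\<rfloor>) = of_int \<lfloor>?y\<rfloor>" using f0 by simp
  have a: "of_int \<lfloor>?y\<rfloor> \<le> ?y" "?y - 1 < of_int \<lfloor>?y\<rfloor>" by linarith+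
  show "real (min (nat \<lfloor>?y\<rfloor>) (2*Suc n+1)) \<ge> min (?y - 1) (2 * real (Suc n) + 1)"
    using r a by (simp add: min_def) linarith
  show "real (min (nat \<lfloor>?y\<rfloor>) (2*Suc n+1)) \<le> ?y"
    using r a y0 by (simp add: min_def) linarith
qed

lemma conv: fixes x :: real
  shows "(\<lambda>n. cdf (Z_scaled_law (Suc n)) x) \<longlonglongrightarrow> (if x < 0 then 0 else if x \<le> 1 then x else 1)"
proof (cases "x < 0")
  case True
  have "cdf (Z_scaled_law (Suc n)) x = 0" for n using cdf_Z[of "Suc n" x] True by simp
  then show ?thesis using True by simp
next
  case False
  then have x0: "0 \<le> x" by simp
  let ?N = "\<lambda>n. real (Suc n)"
  let ?K = "\<lambda>n. real (min (nat \<lfloor>2 * real (Suc n) * x\<rfloor>) (2*Suc n+1))"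
  let ?f = "\<lambda>n. cdf (Z_scaled_law (Suc n)) x"
  have low: "(?K n - 2 * sqrt (?N n)) / (2 * ?N n + 1) \<le> ?f n" for n using cdf_bounds(1)[OF x0, of n] by simp
  have low2: "c * (2 * ?N n / (2 * ?N n + 1)) - (1 + 2 * sqrt (?N n)) / (2 * ?N n + 1) \<le> ?f n"
    if "?K n \<ge> 2 * ?N n * c - 1" for n c
  proof -
    have p: "2 * ?N n + 1 > 0" by simp
    have "c * (2 * ?N n / (2 * ?N n + 1)) - (1 + 2 * sqrt (?N n)) / (2 * ?N n + 1)
       = (2 * ?N n * c - (1 + 2 * sqrt (?N n))) / (2 * ?N n + 1)"
      by (rule alg[OF p])
    also have "\<dots> \<le> (?K n - 2 * sqrt (?N n)) / (2 * ?N n + 1)"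
      using p that by (intro divide_right_mono) auto
    finally show ?thesis using low[of n] by linarith
  qed
  have lim_low: "(\<lambda>n. c * (2 * ?N n / (2 * ?N n + 1)) - (1 + 2 * sqrt (?N n)) / (2 * ?N n + 1)) \<longlonglongrightarrow> c" for c
    using tendsto_diff[OF tendsto_mult[OF tendsto_const[of c] lim1] lim2] by simp
  show ?thesis
  proof (cases "x \<le> 1")
    case True
    have Kl: "?K n \<ge> 2 * ?N n * x - 1" for n
    proof -
      have "2 * ?N n * x - 1 \<le> 2 * ?N n + 1"
        using True by (smt (verit) mult_left_le of_nat_0_le_iff)
      then show ?thesis using K_props(1)[OF x0, of n] by linarith
    qed
    have up: "?f n \<le> x * (2 * ?N n / (2 * ?N n + 1 - 2 * sqrt (?N n)))" for n
    proof -
      have d: "2 * ?N n + 1 - 2 * sqrt (?N n) > 0" by (rule dpos)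
      have "?f n \<le> ?K n / (2 * ?N n + 1 - 2 * sqrt (?N n))" using cdf_bounds(2)[OF x0, of n] by simp
      also have "\<dots> \<le> (2 * ?N n * x) / (2 * ?N n + 1 - 2 * sqrt (?N n))"
        using d K_props(2)[OF x0, of n] by (intro divide_right_mono) auto
      also have "\<dots> = x * (2 * ?N n / (2 * ?N n + 1 - 2 * sqrt (?N n)))" by simp
      finally show ?thesis .
    qed
    have lim_up: "(\<lambda>n. x * (2 * ?N n / (2 * ?N n + 1 - 2 * sqrt (?N n)))) \<longlonglongrightarrow> x"
      using tendsto_mult[OF tendsto_const[of x] lim3] by simp
    have "?f \<longlonglongrightarrow> x"
      by (rule tendsto_sandwich[OF _ _ lim_low[of x] lim_up]) (use low2[OF Kl] up in auto)
    then show ?thesis using False True by simp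
  next
    case c: False
    have Kl: "?K n \<ge> 2 * ?N n * 1 - 1" for n
    proof -
      have "2 * ?N n * 1 - 1 \<le> 2 * ?N n * x - 1" using c by simp
      then show ?thesis using K_props(1)[OF x0, of n] by linarith
    qed
    have "?f \<longlonglongrightarrow> 1"
      by (rule tendsto_sandwich[OF _ _ lim_low[of 1] tendsto_const[of 1]])
        (use low2[OF Kl] cdf_bounds(3)[OF x0] in auto)
    then show ?thesis using False c by simp
  qed
qed

theorem theorem21:
  shows "weak_conv_m (\<lambda>n. Z_scaled_law (Suc n)) (uniform_measure lborel {0..1::real})
    \<and> (\<forall>r::nat. (\<integral>x. x ^ r \<partial>uniform_measure lborel {0..1::real}) = 1 / (real r + 1))"
proof
  show "weak_conv_m (\<lambda>n. Z_scaled_law (Suc n)) (uniform_measure lborel {0..1::real})"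
    unfolding weak_conv_m_def weak_conv_def cdf_unif using conv by blast
  show "\<forall>r::nat. (\<integral>x. x ^ r \<partial>uniform_measure lborel {0..1::real}) = 1 / (real r + 1)"
    using moment by blast
qed


end
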